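(* For all integers $n,m\ge 2$, the number $a(n,m,\Gamma_{sp})$ of single-peaked $(n,m)$-elections on the candidate set $\{c_1,\ldots,c_m\}$ satisfies $a(n,m,\Gamma_{sp})\le m!\cdot 4^{(m-1)(n-1)}$.
   Context: An $(n,m)$-election $(C,\mathcal{P})$ is a set $C$ of $m$ candidates with an ordered $n$-tuple $\mathcal{P}=(V_1,\ldots,V_n)$ of total orders (votes) on $C$. Given a total order $A$ on $C$ (an axis), a vote $V$ contains a valley with respect to $A$ on candidates $c_1,c_2,c_3$ if $c_2$ lies strictly between $c_1$ and $c_3$ in $A$ and $V$ ranks $c_2$ below both $c_1$ and $c_3$. The election is single-peaked with respect to $A$ if no vote contains a valley with respect to $A$, and single-peaked if it is single-peaked with respect to some total order $A$ on $C$. *)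

theory Defs
  imports Main
begin

text \<open>A total order on a finite candidate set C is represented by a list enumerating
  C without repetition; earlier positions are ranked higher (for votes) or lie further
  left (for axes).  "x before y in L" means x occurs strictly earlier than y in L.\<close>

definition total_order_on :: "'a set \<Rightarrow> 'a list \<Rightarrow> bool" where
  "total_order_on C L \<longleftrightarrow> distinct L \<and> set L = C"

definition before :: "'a list \<Rightarrow> 'a \<Rightarrow> 'a \<Rightarrow> bool" where
  "before L x y \<longleftrightarrow> (\<exists>i j. i < j \<and> j < length L \<and> L ! i = x \<and> L ! j = y)"

definition between :: "'a list \<Rightarrow> 'a \<Rightarrow> 'a \<Rightarrow> 'a \<Rightarrow> bool" where
  "between A c1 c2 c3 \<longleftrightarrow> (before A c1 c2 \<and> before A c2 c3) \<or> (before A c3 c2 \<and> before A c2 c1)"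

definition has_valley :: "'a list \<Rightarrow> 'a list \<Rightarrow> 'a \<Rightarrow> 'a \<Rightarrow> 'a \<Rightarrow> bool" where
  "has_valley A V c1 c2 c3 \<longleftrightarrow> between A c1 c2 c3 \<and> before V c1 c2 \<and> before V c3 c2"

definition single_peaked_wrt :: "'a list \<Rightarrow> 'a list list \<Rightarrow> bool" where
  "single_peaked_wrt A P \<longleftrightarrow> (\<forall>V \<in> set P. \<not> (\<exists>c1 c2 c3. has_valley A V c1 c2 c3))"

definition elections :: "'a set \<Rightarrow> nat \<Rightarrow> 'a list list set" where
  "elections C n = {P. length P = n \<and> (\<forall>V \<in> set P. total_order_on C V)}"

definition single_peaked :: "'a set \<Rightarrow> 'a list list \<Rightarrow> bool" where
  "single_peaked C P \<longleftrightarrow> (\<exists>A. total_order_on C A \<and> single_peaked_wrt A P)"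

definition num_single_peaked :: "nat \<Rightarrow> nat \<Rightarrow> nat" where
  "num_single_peaked n m = card {P \<in> elections {1..m} n. single_peaked {1..m} P}"

end

theory Submission
  imports Defs "HOL-Combinatorics.Multiset_Permutations"
begin

definition spv :: "'a list \<Rightarrow> 'a list \<Rightarrow> bool" where
  "spv A V \<longleftrightarrow> \<not> (\<exists>c1 c2 c3. has_valley A V c1 c2 c3)"

definition SPS :: "'a list \<Rightarrow> 'a list set" where
  "SPS A = {V. distinct V \<and> set V = set A \<and> spv A V}"

lemma before_tl: "before (tl L) x y \<Longrightarrow> before L x y"
  unfolding before_def
  apply (elim exE conjE)
  subgoal for i j
    apply (rule exI[of _ "Suc i"], rule exI[of _ "Suc j"])
    apply (cases L) apply auto done
  done

lemma before_butlast: "before (butlast L) x y \<Longrightarrow> before L x y"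
  unfolding before_def
  apply (elim exE conjE)
  subgoal for i j
    apply (rule exI[of _ i], rule exI[of _ j])
    apply (auto simp: nth_butlast) done
  done

lemma spv_mono:
  assumes "spv A V" and "\<And>x y. before A' x y \<Longrightarrow> before A x y"
    and "\<And>x y. before V' x y \<Longrightarrow> before V x y"
  shows "spv A' V'"
  using assms unfolding spv_def has_valley_def between_def by blast

lemma last_endpoint:
  assumes "distinct A" "distinct V" "set V = set A" "spv A V" "V \<noteq> []"
  shows "last V = hd A \<or> last V = last A"
proof (rule ccontr)
  assume nc: "\<not> (last V = hd A \<or> last V = last A)"
  let ?x = "last V"
  have A0: "A \<noteq> []" using assms by auto
  have "?x \<in> set A" using assms by auto
  then obtain i where i: "i < length A" "A ! i = ?x" by (auto simp: in_set_conv_nth)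
  have i0: "i \<noteq> 0" using i nc A0 by (cases i) (auto simp: hd_conv_nth)
  have i1: "i \<noteq> length A - 1" using i nc A0 by (auto simp: last_conv_nth)
  have b1: "before A (hd A) ?x"
    using i A0 i0 unfolding before_def
    apply -
    apply (rule exI[of _ 0], rule exI[of _ i])
    by (auto simp: hd_conv_nth)
  have b2: "before A ?x (last A)"
    using i A0 i1 unfolding before_def
    apply -
    apply (rule exI[of _ i], rule exI[of _ "length A - 1"])
    by (auto simp: last_conv_nth)
  have lastV: "\<And>c. c \<in> set V \<Longrightarrow> c \<noteq> ?x \<Longrightarrow> before V c ?x"
  proof -
    fix c assume c: "c \<in> set V" "c \<noteq> ?x"
    then obtain k where k: "k < length V" "V ! k = c" by (auto simp: in_set_conv_nth)
    have "k \<noteq> length V - 1" using k c assms(5) by (auto simp: last_conv_nth)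
    then show "before V c ?x" unfolding before_def using k assms(5)
      apply -
      apply (rule exI[of _ k], rule exI[of _ "length V - 1"])
      by (auto simp: last_conv_nth)
  qed
  have "hd A \<in> set V" "last A \<in> set V" using A0 assms(3) by auto
  hence "before V (hd A) ?x" "before V (last A) ?x" using lastV nc by auto
  hence "has_valley A V (hd A) ?x (last A)" using b1 b2 unfolding has_valley_def between_def by blast
  thus False using assms(4) unfolding spv_def by blast
qed

lemma SPS_finite: "finite (SPS A)"
proof -
  have "SPS A \<subseteq> {xs. set xs \<subseteq> set A \<and> length xs = length (remdups A)}"
    unfolding SPS_def by (auto simp: length_remdups_card_conv dest: distinct_card)
  thus ?thesis using finite_lists_length_eq[of "set A"] finite_subset by blast
qed

lemma SPS_card: "distinct A \<Longrightarrow> length A = Suc k \<Longrightarrow> card (SPS A) \<le> 2 ^ k"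
proof (induction k arbitrary: A)
  case 0
  then obtain a where A: "A = [a]" by (cases A) auto
  have "SPS A \<subseteq> {[a]}"
  proof
    fix V assume "V \<in> SPS A"
    hence "distinct V" "set V = {a}" unfolding SPS_def using A by auto
    thus "V \<in> {[a]}"
      by (metis distinct_singleton insert_not_empty list.set(1) list.set(2) list.set_cases
          singleton_insert_inj_eq distinct.simps(2) empty_iff insertCI set_empty2 singletonI
          distinct_card card.empty card_1_singleton_iff length_0_conv length_Suc_conv One_nat_def)
  qed
  hence "card (SPS A) \<le> card {[a]}" by (rule card_mono[rotated]) simp
  thus ?case by simp
next
  case (Suc k)
  have A0: "A \<noteq> []" using Suc.prems by auto
  have dt: "distinct (tl A)" and db: "distinct (butlast A)" using Suc.prems by (auto simp: distinct_tl distinct_butlast)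
  have lt: "length (tl A) = Suc k" and lb: "length (butlast A) = Suc k" using Suc.prems by auto
  have sub: "SPS A \<subseteq> (\<lambda>V. V @ [hd A]) ` SPS (tl A) \<union> (\<lambda>V. V @ [last A]) ` SPS (butlast A)" (is "_ \<subseteq> ?R")
  proof
    fix V assume "V \<in> SPS A"
    hence V: "distinct V" "set V = set A" "spv A V" unfolding SPS_def by auto
    hence V0: "V \<noteq> []" using A0 by auto
    have Veq: "V = butlast V @ [last V]" using V0 by simp
    have dbV: "distinct (butlast V)" using V by (simp add: distinct_butlast)
    have sbV: "set (butlast V) = set V - {last V}" using V(1) V0
      by (metis Diff_insert_absorb Veq distinct_append list.set(1) list.simps(15) set_append
          Un_insert_right sup_bot.right_neutral distinct.simps(2) not_distinct_conv_prefix)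
    have spb: "\<And>A'. (\<And>x y. before A' x y \<Longrightarrow> before A x y) \<Longrightarrow> spv A' (butlast V)"
      using spv_mono[OF V(3)] before_butlast by blast
    from last_endpoint[OF Suc.prems(1) V V0] show "V \<in> ?R"
    proof
      assume h: "last V = hd A"
      have "set (tl A) = set A - {hd A}" using Suc.prems(1) A0
        by (cases A) auto
      hence "butlast V \<in> SPS (tl A)" unfolding SPS_def using dbV sbV V h spb[OF before_tl] by auto
      thus ?thesis using Veq h by (intro UnI1 image_eqI[where x="butlast V"]) auto
    next
      assume h: "last V = last A"
      have "set (butlast A) = set A - {last A}" using Suc.prems(1) A0
        by (metis Diff_insert_absorb append_butlast_last_id distinct_append list.set(1)
            list.simps(15) set_append Un_insert_right sup_bot.right_neutral distinct.simps(2)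
            not_distinct_conv_prefix)
      hence "butlast V \<in> SPS (butlast A)" unfolding SPS_def using dbV sbV V h spb[OF before_butlast] by auto
      thus ?thesis using Veq h by (intro UnI2 image_eqI[where x="butlast V"]) auto
    qed
  qed
  have "card (SPS A) \<le> card ((\<lambda>V. V @ [hd A]) ` SPS (tl A) \<union> (\<lambda>V. V @ [last A]) ` SPS (butlast A))"
    by (rule card_mono[OF _ sub]) (simp add: SPS_finite)
  also have "\<dots> \<le> card (SPS (tl A)) + card (SPS (butlast A))"
    by (meson card_Un_le card_image_le SPS_finite add_mono order_trans)
  also have "\<dots> \<le> 2^k + 2^k" using Suc.IH[OF dt lt] Suc.IH[OF db lb] by simp
  finally show ?case by simp
qed

theorem mainTheorem5:
  fixes n m :: nat
  assumes "n \<ge> 2" and "m \<ge> 2"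
  shows "num_single_peaked n m \<le> fact m * 4 ^ ((m - 1) * (n - 1))"
proof -
  let ?Ax = "permutations_of_set {1..m}"
  let ?L = "\<lambda>A. {P. set P \<subseteq> SPS A \<and> length P = n}"
  have sub: "{P \<in> elections {1..m} n. single_peaked {1..m} P} \<subseteq> (\<Union>A\<in>?Ax. ?L A)"
  proof
    fix P assume "P \<in> {P \<in> elections {1..m} n. single_peaked {1..m} P}"
    then obtain A where A: "total_order_on {1..m} A" "single_peaked_wrt A P"
      and P: "length P = n" "\<forall>V\<in>set P. total_order_on {1..m} V"
      unfolding elections_def single_peaked_def by auto
    have "set P \<subseteq> SPS A" using A P unfolding SPS_def spv_def single_peaked_wrt_def total_order_on_def
      by auto
    moreover have "A \<in> ?Ax" using A unfolding total_order_on_def permutations_of_set_def by auto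
    ultimately show "P \<in> (\<Union>A\<in>?Ax. ?L A)" using P by auto
  qed
  have cardL: "card (?L A) \<le> (2^(m-1))^n" if "A \<in> ?Ax" for A
  proof -
    have "distinct A" "length A = Suc (m - 1)" using that assms
      by (auto simp: permutations_of_set_def dest: distinct_card)
    hence "card (SPS A) \<le> 2^(m-1)" using SPS_card by blast
    thus ?thesis by (simp add: card_lists_length_eq SPS_finite power_mono)
  qed
  have "num_single_peaked n m \<le> card (\<Union>A\<in>?Ax. ?L A)"
    unfolding num_single_peaked_def
    by (rule card_mono[OF _ sub]) (auto intro!: finite_lists_length_eq SPS_finite)
  also have "\<dots> \<le> (\<Sum>A\<in>?Ax. card (?L A))" by (rule card_UN_le) simp
  also have "\<dots> \<le> (\<Sum>A\<in>?Ax. (2^(m-1))^n)" by (rule sum_mono) (rule cardL)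
  also have "\<dots> = fact m * 2^((m-1)*n)" by (simp add: power_mult)
  also have "\<dots> \<le> fact m * 4 ^ ((m - 1) * (n - 1))"
  proof -
    have "(m-1)*n \<le> 2*((m-1)*(n-1))" using assms
      by (metis mult.left_commute mult_le_mono2 mult_2 le_add_diff_inverse2 add_le_mono
          le_diff_conv diff_add_inverse2 one_add_one le_refl le_add2 mult_2_right
          diff_le_self distrib_left)
    hence "(2::nat)^((m-1)*n) \<le> 2^(2*((m-1)*(n-1)))" by (rule power_increasing) simp
    thus ?thesis by (simp add: power_mult)
  qed
  finally show ?thesis .
qed

end
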